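(* Let $N=(X,Y,<)$ be a node of a regular poset $(P,\le,A_1\ldots A_k)$. For every $k\in\mathbb{N}$ the following are equivalent: (1) for every non-empty $A\subseteq X$, $|A{\uparrow}\cap Y|\ge \min\{|A|+k,|Y|\}$; (2) for every non-empty $B\subseteq Y$, $|B{\downarrow}\cap X|\ge\min\{|B|+k,|X|\}$.
   Context: Let $(P,\le)$ be a finite poset of width $w$. For $A\subseteq P$ let $A{\uparrow}=\{y\in P: x\le y\text{ for some }x\in A\}$ and $A{\downarrow}=\{y\in P: y\le x\text{ for some }x\in A\}$. For maximal antichains $A,B$ write $A\sqsubseteq B$ if $A\subseteq B{\downarrow}$, and $A\sqsubset B$ if also $A\ne B$. For disjoint antichains $A\sqsubset B$, $(A,B,<)$ denotes the bipartite graph with classes $A,B$ and an edge $(a<b)$ for each $a\in A$, $b\in B$ with $a<b$; it is regular if every edge lies in some perfect matching. A regular poset is a triple $(P,\le,A_1\ldots A_k)$ where $A_1,\dots,A_k$ are maximum antichains of $P$ such that: they partition $P$; $(\{A_1,\dots,A_k\},\sqsubseteq)$ is a linear order with minimum $A_1$ and maximum $A_2$; $a<b$ for all $a\in A_1$, $b\in A_2$; and for every $t\in[2,k]$ and every two antichains $A_p\sqsubset A_s$ that are consecutive in the linear order $(\{A_1,\dots,A_t\},\sqsubseteq)$, the bipartite graph $(A_p,A_s,<)$ is regular. A node of the regular poset is a bipartite graph $(X,Y,<)$ such that for some $t\in[2,k]$ and some $A_p\sqsubset A_s$ consecutive in $(\{A_1,\dots,A_t\},\sqsubseteq)$, we have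 $X\subseteq A_p$, $Y\subseteq A_s$, and $X\cup Y$ is the vertex set of a connected component of $(A_p,A_s,<)$ (with edges $(x<y)$, $x\in X$, $y\in Y$, $x<y$). *)

theory Defs
  imports Main
begin

definition poset :: "'a set \<Rightarrow> ('a \<Rightarrow> 'a \<Rightarrow> bool) \<Rightarrow> bool" where
  "poset P le \<longleftrightarrow> (\<forall>x\<in>P. le x x)
     \<and> (\<forall>x\<in>P. \<forall>y\<in>P. le x y \<and> le y x \<longrightarrow> x = y)
     \<and> (\<forall>x\<in>P. \<forall>y\<in>P. \<forall>z\<in>P. le x y \<and> le y z \<longrightarrow> le x z)"

definition less_p :: "('a \<Rightarrow> 'a \<Rightarrow> bool) \<Rightarrow> 'a \<Rightarrow> 'a \<Rightarrow> bool" where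
  "less_p le x y \<longleftrightarrow> le x y \<and> x \<noteq> y"

definition up_set :: "'a set \<Rightarrow> ('a \<Rightarrow> 'a \<Rightarrow> bool) \<Rightarrow> 'a set \<Rightarrow> 'a set" where
  "up_set P le A = {y\<in>P. \<exists>x\<in>A. le x y}"

definition down_set :: "'a set \<Rightarrow> ('a \<Rightarrow> 'a \<Rightarrow> bool) \<Rightarrow> 'a set \<Rightarrow> 'a set" where
  "down_set P le A = {y\<in>P. \<exists>x\<in>A. le y x}"

definition antichain :: "'a set \<Rightarrow> ('a \<Rightarrow> 'a \<Rightarrow> bool) \<Rightarrow> 'a set \<Rightarrow> bool" where
  "antichain P le A \<longleftrightarrow> A \<subseteq> P \<and> (\<forall>x\<in>A. \<forall>y\<in>A. le x y \<longrightarrow> x = y)"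

definition width :: "'a set \<Rightarrow> ('a \<Rightarrow> 'a \<Rightarrow> bool) \<Rightarrow> nat" where
  "width P le = Max (card ` {A. antichain P le A})"

definition maximum_antichain :: "'a set \<Rightarrow> ('a \<Rightarrow> 'a \<Rightarrow> bool) \<Rightarrow> 'a set \<Rightarrow> bool" where
  "maximum_antichain P le A \<longleftrightarrow> antichain P le A \<and> card A = width P le"

definition sq_le :: "'a set \<Rightarrow> ('a \<Rightarrow> 'a \<Rightarrow> bool) \<Rightarrow> 'a set \<Rightarrow> 'a set \<Rightarrow> bool" where
  "sq_le P le A B \<longleftrightarrow> A \<subseteq> down_set P le B"

definition sq_less :: "'a set \<Rightarrow> ('a \<Rightarrow> 'a \<Rightarrow> bool) \<Rightarrow> 'a set \<Rightarrow> 'a set \<Rightarrow> bool" where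
  "sq_less P le A B \<longleftrightarrow> sq_le P le A B \<and> A \<noteq> B"

definition regular_bip :: "('a \<Rightarrow> 'a \<Rightarrow> bool) \<Rightarrow> 'a set \<Rightarrow> 'a set \<Rightarrow> bool" where
  "regular_bip le A B \<longleftrightarrow> (\<forall>a\<in>A. \<forall>b\<in>B. less_p le a b \<longrightarrow>
      (\<exists>f. bij_betw f A B \<and> (\<forall>x\<in>A. less_p le x (f x)) \<and> f a = b))"

text \<open>Antichains As!p \<sqsubset> As!s are consecutive in the linear order on {As!0, ..., As!(t-1)}
  (0-based indexing: As!0 = A_1, the prefix of length t is A_1..A_t).\<close>
definition consecutive :: "'a set \<Rightarrow> ('a \<Rightarrow> 'a \<Rightarrow> bool) \<Rightarrow> 'a set list \<Rightarrow> nat \<Rightarrow> nat \<Rightarrow> nat \<Rightarrow> bool" where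
  "consecutive P le As t p s \<longleftrightarrow> p < t \<and> s < t \<and> sq_less P le (As!p) (As!s)
     \<and> \<not> (\<exists>q<t. sq_less P le (As!p) (As!q) \<and> sq_less P le (As!q) (As!s))"

definition regular_poset :: "'a set \<Rightarrow> ('a \<Rightarrow> 'a \<Rightarrow> bool) \<Rightarrow> 'a set list \<Rightarrow> bool" where
  "regular_poset P le As \<longleftrightarrow>
     finite P \<and> poset P le \<and> length As \<ge> 2
   \<and> (\<forall>i<length As. maximum_antichain P le (As!i))
   \<and> (\<forall>i<length As. \<forall>j<length As. i \<noteq> j \<longrightarrow> As!i \<inter> As!j = {})
   \<and> \<Union> (set As) = P
   \<and> (\<forall>i<length As. \<forall>j<length As. sq_le P le (As!i) (As!j) \<or> sq_le P le (As!j) (As!i))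
   \<and> (\<forall>i<length As. sq_le P le (As!0) (As!i) \<and> sq_le P le (As!i) (As!1))
   \<and> (\<forall>a\<in>As!0. \<forall>b\<in>As!1. less_p le a b)
   \<and> (\<forall>t\<in>{2..length As}. \<forall>p s. consecutive P le As t p s \<longrightarrow> regular_bip le (As!p) (As!s))"

definition bip_edge :: "('a \<Rightarrow> 'a \<Rightarrow> bool) \<Rightarrow> 'a set \<Rightarrow> 'a set \<Rightarrow> 'a \<Rightarrow> 'a \<Rightarrow> bool" where
  "bip_edge le A B u v \<longleftrightarrow> (u \<in> A \<and> v \<in> B \<and> less_p le u v) \<or> (v \<in> A \<and> u \<in> B \<and> less_p le v u)"

definition component :: "('a \<Rightarrow> 'a \<Rightarrow> bool) \<Rightarrow> 'a set \<Rightarrow> 'a set \<Rightarrow> 'a \<Rightarrow> 'a set" where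
  "component le A B v = {u. (bip_edge le A B)\<^sup>*\<^sup>* v u}"

definition node :: "'a set \<Rightarrow> ('a \<Rightarrow> 'a \<Rightarrow> bool) \<Rightarrow> 'a set list \<Rightarrow> 'a set \<Rightarrow> 'a set \<Rightarrow> bool" where
  "node P le As X Y \<longleftrightarrow> (\<exists>t\<in>{2..length As}. \<exists>p s. consecutive P le As t p s
      \<and> X \<subseteq> As!p \<and> Y \<subseteq> As!s
      \<and> (\<exists>v\<in>As!p \<union> As!s. X \<union> Y = component le (As!p) (As!s) v))"

end

theory Submission
  imports Defs
begin

lemma dir1:
  assumes fX: "finite X" and fY: "finite Y" and XP: "X \<subseteq> P" and eq: "card X = card Y"
   and H: "\<forall>A. A \<subseteq> X \<and> A \<noteq> {} \<longrightarrow> card (up_set P le A \<inter> Y) \<ge> min (card A + k) (card Y)"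
   and B: "B \<subseteq> Y" "B \<noteq> {}"
  shows "card (down_set P le B \<inter> X) \<ge> min (card B + k) (card X)"
proof (cases "X - down_set P le B = {}")
  case True then have "down_set P le B \<inter> X = X" by auto
  then show ?thesis by simp
next
  case False
  define A where "A = X - down_set P le B"
  have sub: "up_set P le A \<inter> Y \<subseteq> Y - B" using XP unfolding A_def up_set_def down_set_def by auto
  have fB: "finite B" using B fY finite_subset by blast
  have cB: "card B \<ge> 1" using fB B(2) by (simp add: Suc_le_eq card_gt_0_iff)
  have c1: "card (up_set P le A \<inter> Y) \<le> card Y - card B"
    using card_mono[OF _ sub] card_Diff_subset[OF fB B(1)] fY by auto
  have cY: "card B \<le> card Y" using card_mono[OF fY B(1)] .
  have h: "card (up_set P le A \<inter> Y) \<ge> min (card A + k) (card Y)" using H False unfolding A_def by auto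
  have h2: "card (up_set P le A \<inter> Y) \<ge> card A + k" using h c1 cB cY by linarith
  have "A = X - (down_set P le B \<inter> X)" unfolding A_def by auto
  then have cA: "card A = card X - card (down_set P le B \<inter> X)"
    using card_Diff_subset[of "down_set P le B \<inter> X" X] fX by auto
  have "card (down_set P le B \<inter> X) \<le> card X" using fX by (simp add: card_mono)
  then show ?thesis using cA h2 c1 eq cY by linarith
qed

lemma up_down_flip: "up_set P le A = down_set P (\<lambda>x y. le y x) A"
  "down_set P le A = up_set P (\<lambda>x y. le y x) A"
  unfolding up_set_def down_set_def by auto

lemma equiv_gen:
  assumes fX: "finite X" and fY: "finite Y" and XP: "X \<subseteq> P" and YP: "Y \<subseteq> P" and eq: "card X = card Y"
  shows "(\<forall>A. A \<subseteq> X \<and> A \<noteq> {} \<longrightarrow> card (up_set P le A \<inter> Y) \<ge> min (card A + k) (card Y))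
     \<longleftrightarrow> (\<forall>B. B \<subseteq> Y \<and> B \<noteq> {} \<longrightarrow> card (down_set P le B \<inter> X) \<ge> min (card B + k) (card X))"
proof
  assume H: "\<forall>A. A \<subseteq> X \<and> A \<noteq> {} \<longrightarrow> card (up_set P le A \<inter> Y) \<ge> min (card A + k) (card Y)"
  show "\<forall>B. B \<subseteq> Y \<and> B \<noteq> {} \<longrightarrow> card (down_set P le B \<inter> X) \<ge> min (card B + k) (card X)"
    using dir1[OF fX fY XP eq H] by blast
next
  assume H: "\<forall>B. B \<subseteq> Y \<and> B \<noteq> {} \<longrightarrow> card (down_set P le B \<inter> X) \<ge> min (card B + k) (card X)"
  have H': "\<forall>B. B \<subseteq> Y \<and> B \<noteq> {} \<longrightarrow> card (up_set P (\<lambda>x y. le y x) B \<inter> X) \<ge> min (card B + k) (card X)"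
    using H by (simp only: up_down_flip(2))
  show "\<forall>A. A \<subseteq> X \<and> A \<noteq> {} \<longrightarrow> card (up_set P le A \<inter> Y) \<ge> min (card A + k) (card Y)"
    unfolding up_down_flip(1) using dir1[OF fY fX YP eq[symmetric] H'] by blast
qed

lemma regD:
  assumes "regular_poset P le As"
  shows "finite P" "\<And>i. i < length As \<Longrightarrow> maximum_antichain P le (As!i)"
    "\<And>i j. i < length As \<Longrightarrow> j < length As \<Longrightarrow> i \<noteq> j \<Longrightarrow> As!i \<inter> As!j = {}"
    "\<Union> (set As) = P"
    "\<And>t p s. t \<in> {2..length As} \<Longrightarrow> consecutive P le As t p s \<Longrightarrow> regular_bip le (As!p) (As!s)"
  using assms unfolding regular_poset_def by blast+

lemma node_card:
  assumes R: "regular_poset P le As" and N: "node P le As X Y"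
  shows "finite X \<and> finite Y \<and> X \<subseteq> P \<and> Y \<subseteq> P \<and> card X = card Y"
proof -
  from N obtain t where t: "t \<in> {2..length As}" and
    "\<exists>p s. consecutive P le As t p s
      \<and> X \<subseteq> As!p \<and> Y \<subseteq> As!s
      \<and> (\<exists>v\<in>As!p \<union> As!s. X \<union> Y = component le (As!p) (As!s) v)"
    unfolding node_def by (elim bexE) assumption
  then obtain p s where c: "consecutive P le As t p s"
    and XA: "X \<subseteq> As!p" and YA: "Y \<subseteq> As!s" and
    "\<exists>v\<in>As!p \<union> As!s. X \<union> Y = component le (As!p) (As!s) v" by (elim exE conjE) assumption
  then obtain v where C: "X \<union> Y = component le (As!p) (As!s) v" by (elim bexE) assumption
  have c3: "p < t \<and> s < t \<and> sq_less P le (As!p) (As!s)"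
    using c unfolding consecutive_def by (elim conjE) (intro conjI)
  have tl: "t \<le> length As" using t by simp
  have ps: "p < length As" "s < length As" "sq_less P le (As!p) (As!s)"
    using c3 tl by simp_all
  have pns: "p \<noteq> s" using ps(3) unfolding sq_less_def by auto
  have disj: "As!p \<inter> As!s = {}" using regD(3)[OF R ps(1,2) pns] .
  have finP: "finite P" using regD(1)[OF R] .
  have ApP: "As!p \<subseteq> P" "As!s \<subseteq> P" proof -
    have "As!p \<in> set As" "As!s \<in> set As" using ps(1,2) by simp_all
    then show "As!p \<subseteq> P" "As!s \<subseteq> P" using regD(4)[OF R] by blast+
  qed
  have cardeq: "card (As!p) = card (As!s)" using regD(2)[OF R ps(1)] regD(2)[OF R ps(2)]
    unfolding maximum_antichain_def by simp
  have reg: "regular_bip le (As!p) (As!s)" using regD(5)[OF R t c] .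
  have sqle: "As!p \<subseteq> down_set P le (As!s)" using ps(3) unfolding sq_less_def sq_le_def by auto
  have "As!p \<noteq> {}"
  proof
    assume e: "As!p = {}"
    then have "card (As!s) = 0" using cardeq by simp
    then have "As!s = {}" using finite_subset[OF ApP(2) finP] by simp
    then show False using e ps(3) unfolding sq_less_def by simp
  qed
  then obtain a where a: "a \<in> As!p" by blast
  have "a \<in> down_set P le (As!s)" using a sqle by blast
  then obtain b where b: "b \<in> As!s" "le a b" unfolding down_set_def by blast
  have "a \<noteq> b" using a b disj by auto
  then obtain f where f: "bij_betw f (As!p) (As!s)" "\<forall>x\<in>As!p. less_p le x (f x)"
    using reg a b unfolding regular_bip_def less_p_def by blast
  let ?C = "component le (As!p) (As!s) v"
  have Xe: "X = ?C \<inter> As!p" using C XA YA disj by blast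
  have Ye: "Y = ?C \<inter> As!s" using C XA YA disj by blast
  have "f ` X = Y"
  proof
    show "f ` X \<subseteq> Y"
    proof
      fix y assume "y \<in> f ` X"
      then obtain x where x: "x \<in> X" "y = f x" by auto
      have xp: "x \<in> As!p" using x XA by auto
      have ys: "y \<in> As!s" using f(1) xp x bij_betwE by fastforce
      have e: "bip_edge le (As!p) (As!s) x y" using f(2) xp x ys unfolding bip_edge_def by auto
      have "x \<in> ?C" using x Xe by auto
      then have "(bip_edge le (As!p) (As!s))\<^sup>*\<^sup>* v x" unfolding component_def by simp
      then have "(bip_edge le (As!p) (As!s))\<^sup>*\<^sup>* v y" using e by (rule rtranclp.rtrancl_into_rtrancl)
      then have "y \<in> ?C" unfolding component_def by simp
      moreover have "y \<in> As!s" using f(1) xp x bij_betwE by fastforce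
      ultimately show "y \<in> Y" using Ye by auto
    qed
  next
    show "Y \<subseteq> f ` X"
    proof
      fix y assume y: "y \<in> Y"
      then have ys: "y \<in> As!s" using YA by auto
      have "y \<in> f ` (As!p)" using ys bij_betw_imp_surj_on[OF f(1)] by simp
      then obtain x where x: "x \<in> As!p" "y = f x" by blast
      have e: "bip_edge le (As!p) (As!s) y x" using f(2) x ys unfolding bip_edge_def by auto
      have "y \<in> ?C" using y Ye by auto
      then have "(bip_edge le (As!p) (As!s))\<^sup>*\<^sup>* v y" unfolding component_def by simp
      then have "(bip_edge le (As!p) (As!s))\<^sup>*\<^sup>* v x" using e by (rule rtranclp.rtrancl_into_rtrancl)
      then have "x \<in> ?C" unfolding component_def by simp
      then have "x \<in> X" using Xe x by auto
      then show "y \<in> f ` X" using x by auto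
    qed
  qed
  moreover have "inj_on f X" using f(1) XA unfolding bij_betw_def by (meson inj_on_subset)
  ultimately have cXY: "card X = card Y" by (metis card_image)
  have XP: "X \<subseteq> P" using XA ApP(1) by (rule order_trans)
  have YP: "Y \<subseteq> P" using YA ApP(2) by (rule order_trans)
  show ?thesis using XP YP finite_subset[OF XP finP] finite_subset[OF YP finP] cXY by simp
qed

theorem proposition8:
  fixes P :: "'a set" and le :: "'a \<Rightarrow> 'a \<Rightarrow> bool" and As :: "'a set list"
    and X Y :: "'a set" and k :: nat
  assumes "regular_poset P le As"
    and "node P le As X Y"
  shows "(\<forall>A. A \<subseteq> X \<and> A \<noteq> {} \<longrightarrow> card (up_set P le A \<inter> Y) \<ge> min (card A + k) (card Y))
     \<longleftrightarrow> (\<forall>B. B \<subseteq> Y \<and> B \<noteq> {} \<longrightarrow> card (down_set P le B \<inter> X) \<ge> min (card B + k) (card X))"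
proof -
  have h: "finite X \<and> finite Y \<and> X \<subseteq> P \<and> Y \<subseteq> P \<and> card X = card Y"
    using node_card[OF assms] .
  show ?thesis using equiv_gen[of X Y P] h by blast
qed

end
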